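(* Let $\widehat z_2(s,t)$ be a complex-valued function of class $\mathcal{C}^7$ on $[0,\epsilon]\times I$, where $I$ is a neighborhood of $[0,2\pi]$, such that $\widehat z_2(s,t)=e^{it}-\tfrac43 a s^4e^{3it}+O(s^5)$ with $a\in\mathbb{R}$, $\operatorname{Im}\widehat z_2(s,0)=0$ for all $s\in[0,\epsilon]$, and for each $s\in(0,\epsilon]$ the map $t\mapsto\widehat z_2(s,t)$ is periodic with period $T_s$ and parametrizes a simple closed curve on $[0,T_s]$ (with $T_0=2\pi$). Then, after possibly shrinking $\epsilon$, the function $[0,\epsilon]\ni s\mapsto T_s\in\mathbb{R}$ is of class $\mathcal{C}^7$ and $T_s=2\pi+O(s^5)$.
   Context: In the paper, $\widehat z_2(s,t)=z_2(s,t)/s$, where $z_2(s,t)$ is the $z_2$-component of the family of chains (solutions of the Fefferman Hamiltonian system) of the hypersurface $M$ with the specified initial conditions; the expansion hypothesis corresponds to $z_2(s,t)=se^{it}-\tfrac43 a s^5e^{3it}+O(s^6)$. *)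

theory Defs
  imports "HOL-Analysis.Analysis"
begin

text \<open>Functions of class C^k on a set S (derivatives taken within S, so one-sided
  derivatives at boundary points of closed sets are used).\<close>

primrec Ck_on :: "nat \<Rightarrow> 'a::euclidean_space set \<Rightarrow> ('a \<Rightarrow> 'b::real_normed_vector) \<Rightarrow> bool" where
  "Ck_on 0 S f \<longleftrightarrow> continuous_on S f"
| "Ck_on (Suc k) S f \<longleftrightarrow>
     (\<exists>D :: 'a \<Rightarrow> 'a \<Rightarrow> 'b.
        (\<forall>x\<in>S. (f has_derivative (\<lambda>h. \<Sum>i\<in>Basis. (h \<bullet> i) *\<^sub>R D i x)) (at x within S))
        \<and> (\<forall>i\<in>Basis. Ck_on k S (D i)))"

end

theory Submission
  imports Defs "HOL-Complex_Analysis.Complex_Analysis"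
begin

declare Ck_on.simps(2)[simp del]

lemma Ck_on_SucI:
  assumes "\<forall>x\<in>S. (f has_derivative (\<lambda>h. \<Sum>i\<in>Basis. (h \<bullet> i) *\<^sub>R D i x)) (at x within S)"
    and "\<forall>i\<in>Basis. Ck_on k S (D i)"
  shows "Ck_on (Suc k) S f"
  unfolding Ck_on.simps(2) by (intro exI[of _ D] conjI assms)

lemma Ck_on_SucE:
  assumes "Ck_on (Suc k) S f"
  obtains D where "\<forall>x\<in>S. (f has_derivative (\<lambda>h. \<Sum>i\<in>Basis. (h \<bullet> i) *\<^sub>R D i x)) (at x within S)"
    "\<forall>i\<in>Basis. Ck_on k S (D i)"
  using assms unfolding Ck_on.simps(2) by (elim exE conjE)

lemma Ck_on_Suc_mono: "Ck_on (Suc k) S f \<Longrightarrow> Ck_on k S f"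
proof (induction k arbitrary: f)
  case 0
  obtain D where "\<forall>x\<in>S. (f has_derivative (\<lambda>h. \<Sum>i\<in>Basis. (h \<bullet> i) *\<^sub>R D i x)) (at x within S)"
     "\<forall>i\<in>Basis. Ck_on 0 S (D i)" using 0 by (rule Ck_on_SucE)
  then show ?case
    by (auto simp: continuous_on_eq_continuous_within intro: has_derivative_continuous)
next
  case (Suc k)
  obtain D where "\<forall>x\<in>S. (f has_derivative (\<lambda>h. \<Sum>i\<in>Basis. (h \<bullet> i) *\<^sub>R D i x)) (at x within S)"
     "\<forall>i\<in>Basis. Ck_on (Suc k) S (D i)" using Suc.prems(1) by (rule Ck_on_SucE)
  then show ?case using Suc.IH by (intro Ck_on_SucI[of S f D]) auto
qed

lemma Ck_on_le: "k \<le> m \<Longrightarrow> Ck_on m S f \<Longrightarrow> Ck_on k S f"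
  by (induction m rule: dec_induct) (use Ck_on_Suc_mono in blast)+

lemma Ck_on_le': "Ck_on m S f \<Longrightarrow> k \<le> m \<Longrightarrow> Ck_on k S f"
  using Ck_on_le by blast

lemma Ck_on_cont: "Ck_on k S f \<Longrightarrow> continuous_on S f"
  using Ck_on_le[of 0 k] by auto

lemma Ck_on_subset: "Ck_on k S f \<Longrightarrow> T \<subseteq> S \<Longrightarrow> Ck_on k T f"
proof (induction k arbitrary: f)
  case 0 then show ?case by (auto intro: continuous_on_subset)
next
  case (Suc k)
  obtain D where "\<forall>x\<in>S. (f has_derivative (\<lambda>h. \<Sum>i\<in>Basis. (h \<bullet> i) *\<^sub>R D i x)) (at x within S)"
     "\<forall>i\<in>Basis. Ck_on k S (D i)" using Suc.prems(1) by (rule Ck_on_SucE)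
  then show ?case using Suc
    by (intro Ck_on_SucI[of T f D]) (auto intro: has_derivative_subset)
qed

lemma Ck_on_const: "Ck_on k S (\<lambda>x. c)"
proof (induction k arbitrary: c)
  case 0 then show ?case by simp
next
  case (Suc k)
  show ?case
    by (rule Ck_on_SucI[where D="\<lambda>i x. 0"]) (auto intro: Suc)
qed

lemma Ck_on_add: "Ck_on k S f \<Longrightarrow> Ck_on k S g \<Longrightarrow> Ck_on k S (\<lambda>x. f x + g x)"
proof (induction k arbitrary: f g)
  case 0 then show ?case by (auto intro: continuous_on_add)
next
  case (Suc k)
  obtain D where D: "\<forall>x\<in>S. (f has_derivative (\<lambda>h. \<Sum>i\<in>Basis. (h \<bullet> i) *\<^sub>R D i x)) (at x within S)"
     "\<forall>i\<in>Basis. Ck_on k S (D i)" using Suc.prems(1) by (rule Ck_on_SucE)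
  obtain E where E: "\<forall>x\<in>S. (g has_derivative (\<lambda>h. \<Sum>i\<in>Basis. (h \<bullet> i) *\<^sub>R E i x)) (at x within S)"
     "\<forall>i\<in>Basis. Ck_on k S (E i)" using Suc.prems(2) by (rule Ck_on_SucE)
  show ?case
  proof (rule Ck_on_SucI[where D="\<lambda>i x. D i x + E i x"])
    show "\<forall>x\<in>S. ((\<lambda>x. f x + g x) has_derivative (\<lambda>h. \<Sum>i\<in>Basis. (h \<bullet> i) *\<^sub>R (D i x + E i x))) (at x within S)"
      using D(1) E(1) by (auto intro!: has_derivative_eq_rhs[OF has_derivative_add] simp: scaleR_right_distrib sum.distrib)
    show "\<forall>i\<in>Basis. Ck_on k S (\<lambda>x. D i x + E i x)" using D(2) E(2) Suc.IH by auto
  qed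
qed

lemma Ck_on_sum: "finite A \<Longrightarrow> (\<And>j. j \<in> A \<Longrightarrow> Ck_on k S (f j)) \<Longrightarrow> Ck_on k S (\<lambda>x. \<Sum>j\<in>A. f j x)"
  by (induction A rule: finite_induct) (auto intro: Ck_on_add Ck_on_const)

lemma Ck_on_linear: "bounded_linear L \<Longrightarrow> Ck_on k S f \<Longrightarrow> Ck_on k S (\<lambda>x. L (f x))"
proof (induction k arbitrary: f)
  case 0 then show ?case by (auto intro: continuous_on_compose2[of UNIV L] linear_continuous_on)
next
  case (Suc k)
  obtain D where D: "\<forall>x\<in>S. (f has_derivative (\<lambda>h. \<Sum>i\<in>Basis. (h \<bullet> i) *\<^sub>R D i x)) (at x within S)"
     "\<forall>i\<in>Basis. Ck_on k S (D i)" using Suc.prems(2) by (rule Ck_on_SucE)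
  have lin: "linear L" using Suc.prems(1) bounded_linear.linear by blast
  show ?case
  proof (rule Ck_on_SucI[where D="\<lambda>i x. L (D i x)"])
    show "\<forall>x\<in>S. ((\<lambda>x. L (f x)) has_derivative (\<lambda>h. \<Sum>i\<in>Basis. (h \<bullet> i) *\<^sub>R L (D i x))) (at x within S)"
      using D(1) by (auto intro!: has_derivative_eq_rhs[OF bounded_linear.has_derivative[OF Suc.prems(1)]]
          simp: linear_sum[OF lin] linear_scale[OF lin])
    show "\<forall>i\<in>Basis. Ck_on k S (\<lambda>x. L (D i x))" using D(2) Suc by auto
  qed
qed

lemma eqS: fixes h :: "'a::euclidean_space" and b :: "'b::real_normed_vector"
  shows "c *\<^sub>R (\<Sum>i\<in>Basis. (h \<bullet> i) *\<^sub>R E i) + (\<Sum>i\<in>Basis. (h \<bullet> i) *\<^sub>R d i) *\<^sub>R b = (\<Sum>i\<in>Basis. (h \<bullet> i) *\<^sub>R (c *\<^sub>R E i + d i *\<^sub>R b))"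
  by (simp add: scaleR_sum_right scaleR_sum_left scaleR_add_right sum.distrib ac_simps)
lemma eqI: fixes h :: "'a::euclidean_space" and c :: real and d :: "'a \<Rightarrow> real"
  shows "- (c * (\<Sum>i\<in>Basis. (h \<bullet> i) *\<^sub>R d i) * c) = (\<Sum>i\<in>Basis. (h \<bullet> i) *\<^sub>R ((-1) * (c * (d i * c))))"
  by (simp add: sum_distrib_left sum_distrib_right sum_negf ac_simps)
lemma eqC: fixes h :: "'a::euclidean_space" and Dg :: "'c::euclidean_space \<Rightarrow> 'b::real_normed_vector"
  shows "(\<Sum>j\<in>Basis. ((\<Sum>i\<in>Basis. (h \<bullet> i) *\<^sub>R E i) \<bullet> j) *\<^sub>R Dg j) = (\<Sum>i\<in>Basis. (h \<bullet> i) *\<^sub>R (\<Sum>j\<in>Basis. (E i \<bullet> j) *\<^sub>R Dg j))"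
  apply (simp add: inner_sum_left scaleR_sum_left)
  apply (subst sum.swap)
  apply (simp add: scaleR_sum_right)
  done

lemma Ck_on_scaleR:
  fixes f :: "'a::euclidean_space \<Rightarrow> real" and g :: "'a \<Rightarrow> 'b::real_normed_vector"
  shows "Ck_on k S f \<Longrightarrow> Ck_on k S g \<Longrightarrow> Ck_on k S (\<lambda>x. f x *\<^sub>R g x)"
proof (induction k arbitrary: f g)
  case 0 then show ?case by (auto intro: continuous_on_scaleR)
next
  case (Suc k)
  obtain D where D: "\<forall>x\<in>S. (f has_derivative (\<lambda>h. \<Sum>i\<in>Basis. (h \<bullet> i) *\<^sub>R D i x)) (at x within S)"
     "\<forall>i\<in>Basis. Ck_on k S (D i)" using Suc.prems(1) by (rule Ck_on_SucE)
  obtain E where E: "\<forall>x\<in>S. (g has_derivative (\<lambda>h. \<Sum>i\<in>Basis. (h \<bullet> i) *\<^sub>R E i x)) (at x within S)"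
     "\<forall>i\<in>Basis. Ck_on k S (E i)" using Suc.prems(2) by (rule Ck_on_SucE)
  have fk: "Ck_on k S f" "Ck_on k S g" using Suc.prems Ck_on_Suc_mono by blast+
  show ?case
  proof (rule Ck_on_SucI[where D="\<lambda>i x. f x *\<^sub>R E i x + D i x *\<^sub>R g x"])
    show "\<forall>x\<in>S. ((\<lambda>x. f x *\<^sub>R g x) has_derivative (\<lambda>h. \<Sum>i\<in>Basis. (h \<bullet> i) *\<^sub>R (f x *\<^sub>R E i x + D i x *\<^sub>R g x))) (at x within S)"
    proof
      fix x assume x: "x \<in> S"
      have "((\<lambda>x. f x *\<^sub>R g x) has_derivative (\<lambda>h. f x *\<^sub>R (\<Sum>i\<in>Basis. (h \<bullet> i) *\<^sub>R E i x) + (\<Sum>i\<in>Basis. (h \<bullet> i) *\<^sub>R D i x) *\<^sub>R g x)) (at x within S)"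
        using D(1) E(1) x by (intro has_derivative_scaleR) auto
      then show "((\<lambda>x. f x *\<^sub>R g x) has_derivative (\<lambda>h. \<Sum>i\<in>Basis. (h \<bullet> i) *\<^sub>R (f x *\<^sub>R E i x + D i x *\<^sub>R g x))) (at x within S)"
        by (rule has_derivative_eq_rhs) (rule ext, rule eqS)
    qed
    show "\<forall>i\<in>Basis. Ck_on k S (\<lambda>x. f x *\<^sub>R E i x + D i x *\<^sub>R g x)"
      using D(2) E(2) Suc.IH fk by (auto intro!: Ck_on_add)
  qed
qed

lemma Ck_on_mult:
  fixes f g :: "'a::euclidean_space \<Rightarrow> real"
  shows "Ck_on k S f \<Longrightarrow> Ck_on k S g \<Longrightarrow> Ck_on k S (\<lambda>x. f x * g x)"
  using Ck_on_scaleR[of k S f g] by simp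

lemma Ck_on_inverse:
  fixes f :: "'a::euclidean_space \<Rightarrow> real"
  shows "Ck_on k S f \<Longrightarrow> (\<forall>x\<in>S. f x \<noteq> 0) \<Longrightarrow> Ck_on k S (\<lambda>x. inverse (f x))"
proof (induction k arbitrary: f)
  case 0 then show ?case by (auto intro: continuous_on_inverse)
next
  case (Suc k)
  obtain D where D: "\<forall>x\<in>S. (f has_derivative (\<lambda>h. \<Sum>i\<in>Basis. (h \<bullet> i) *\<^sub>R D i x)) (at x within S)"
     "\<forall>i\<in>Basis. Ck_on k S (D i)" using Suc.prems(1) by (rule Ck_on_SucE)
  have fk: "Ck_on k S f" using Suc.prems Ck_on_Suc_mono by blast
  have ik: "Ck_on k S (\<lambda>x. inverse (f x))" using Suc.IH fk Suc.prems by blast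
  show ?case
  proof (rule Ck_on_SucI[where D="\<lambda>i x. (-1) * (inverse (f x) * (D i x * inverse (f x)))"])
    show "\<forall>x\<in>S. ((\<lambda>x. inverse (f x)) has_derivative (\<lambda>h. \<Sum>i\<in>Basis. (h \<bullet> i) *\<^sub>R ((-1) * (inverse (f x) * (D i x * inverse (f x)))))) (at x within S)"
    proof
      fix x assume x: "x \<in> S"
      have "((\<lambda>x. inverse (f x)) has_derivative (\<lambda>h. - (inverse (f x) * (\<Sum>i\<in>Basis. (h \<bullet> i) *\<^sub>R D i x) * inverse (f x)))) (at x within S)"
      proof -
        have d: "(f has_derivative (\<lambda>h. \<Sum>i\<in>Basis. (h \<bullet> i) *\<^sub>R D i x)) (at x within S)" using D(1) x by auto
        have "f x \<noteq> 0" using Suc.prems(2) x by auto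
        from Deriv.has_derivative_inverse[OF this d] show ?thesis .
      qed
      then show "((\<lambda>x. inverse (f x)) has_derivative (\<lambda>h. \<Sum>i\<in>Basis. (h \<bullet> i) *\<^sub>R ((-1) * (inverse (f x) * (D i x * inverse (f x)))))) (at x within S)"
        by (rule has_derivative_eq_rhs) (rule ext, rule eqI)
    qed
    show "\<forall>i\<in>Basis. Ck_on k S (\<lambda>x. (-1) * (inverse (f x) * (D i x * inverse (f x))))"
      by (intro ballI Ck_on_mult Ck_on_const) (use D(2) ik in auto)
  qed
qed

lemma Ck_on_compose:
  fixes g :: "'c::euclidean_space \<Rightarrow> 'b::real_normed_vector" and \<gamma> :: "'a::euclidean_space \<Rightarrow> 'c"
  shows "Ck_on k S g \<Longrightarrow> Ck_on k A \<gamma> \<Longrightarrow> \<gamma> ` A \<subseteq> S \<Longrightarrow> Ck_on k A (\<lambda>x. g (\<gamma> x))"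
proof (induction k arbitrary: g \<gamma>)
  case 0 then show ?case by (auto intro: continuous_on_compose2)
next
  case (Suc k)
  obtain D where D: "\<forall>x\<in>S. (g has_derivative (\<lambda>h. \<Sum>j\<in>Basis. (h \<bullet> j) *\<^sub>R D j x)) (at x within S)"
     "\<forall>i\<in>Basis. Ck_on k S (D i)" using Suc.prems(1) by (rule Ck_on_SucE)
  obtain E where E: "\<forall>x\<in>A. (\<gamma> has_derivative (\<lambda>h. \<Sum>i\<in>Basis. (h \<bullet> i) *\<^sub>R E i x)) (at x within A)"
     "\<forall>i\<in>Basis. Ck_on k A (E i)" using Suc.prems(2) by (rule Ck_on_SucE)
  have fk: "Ck_on k A \<gamma>" using Suc.prems Ck_on_Suc_mono by blast
  show ?case
  proof (rule Ck_on_SucI[where D="\<lambda>i x. \<Sum>j\<in>Basis. (E i x \<bullet> j) *\<^sub>R D j (\<gamma> x)"])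
    show "\<forall>x\<in>A. ((\<lambda>x. g (\<gamma> x)) has_derivative (\<lambda>h. \<Sum>i\<in>Basis. (h \<bullet> i) *\<^sub>R (\<Sum>j\<in>Basis. (E i x \<bullet> j) *\<^sub>R D j (\<gamma> x)))) (at x within A)"
    proof
      fix x assume x: "x \<in> A"
      have g: "(g has_derivative (\<lambda>h. \<Sum>j\<in>Basis. (h \<bullet> j) *\<^sub>R D j (\<gamma> x))) (at (\<gamma> x) within \<gamma> ` A)"
        using D(1) Suc.prems(3) x by (auto intro: has_derivative_subset)
      have "((g \<circ> \<gamma>) has_derivative ((\<lambda>h. \<Sum>j\<in>Basis. (h \<bullet> j) *\<^sub>R D j (\<gamma> x)) \<circ> (\<lambda>h. \<Sum>i\<in>Basis. (h \<bullet> i) *\<^sub>R E i x))) (at x within A)"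
        by (rule diff_chain_within[OF E(1)[rule_format, OF x] g])
      then show "((\<lambda>x. g (\<gamma> x)) has_derivative (\<lambda>h. \<Sum>i\<in>Basis. (h \<bullet> i) *\<^sub>R (\<Sum>j\<in>Basis. (E i x \<bullet> j) *\<^sub>R D j (\<gamma> x)))) (at x within A)"
        unfolding o_def by (rule has_derivative_eq_rhs) (rule ext, rule eqC)
    qed
    show "\<forall>i\<in>Basis. Ck_on k A (\<lambda>x. \<Sum>j\<in>Basis. (E i x \<bullet> j) *\<^sub>R D j (\<gamma> x))"
      using D(2) E(2) Suc fk
      by (auto intro!: Ck_on_sum Ck_on_scaleR Ck_on_linear[where L="\<lambda>v. v \<bullet> _"] bounded_linear_inner_left)
  qed
qed

lemma Ck_on_pair:
  fixes f :: "'a::euclidean_space \<Rightarrow> 'b::real_normed_vector" and g :: "'a \<Rightarrow> 'c::real_normed_vector"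
  shows "Ck_on k S f \<Longrightarrow> Ck_on k S g \<Longrightarrow> Ck_on k S (\<lambda>x. (f x, g x))"
proof (induction k arbitrary: f g)
  case 0 then show ?case by (auto intro: continuous_on_Pair)
next
  case (Suc k)
  obtain D where D: "\<forall>x\<in>S. (f has_derivative (\<lambda>h. \<Sum>i\<in>Basis. (h \<bullet> i) *\<^sub>R D i x)) (at x within S)"
     "\<forall>i\<in>Basis. Ck_on k S (D i)" using Suc.prems(1) by (rule Ck_on_SucE)
  obtain E where E: "\<forall>x\<in>S. (g has_derivative (\<lambda>h. \<Sum>i\<in>Basis. (h \<bullet> i) *\<^sub>R E i x)) (at x within S)"
     "\<forall>i\<in>Basis. Ck_on k S (E i)" using Suc.prems(2) by (rule Ck_on_SucE)
  show ?case
  proof (rule Ck_on_SucI[where D="\<lambda>i x. (D i x, E i x)"])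
    show "\<forall>x\<in>S. ((\<lambda>x. (f x, g x)) has_derivative (\<lambda>h. \<Sum>i\<in>Basis. (h \<bullet> i) *\<^sub>R (D i x, E i x))) (at x within S)"
      using D(1) E(1) by (auto intro!: has_derivative_eq_rhs[OF has_derivative_Pair]
          simp: prod_eq_iff fst_sum snd_sum)
    show "\<forall>i\<in>Basis. Ck_on k S (\<lambda>x. (D i x, E i x))" using D(2) E(2) Suc.IH by auto
  qed
qed

lemma Ck_on_id: "Ck_on k S (\<lambda>x. x)"
proof (cases k)
  case 0 then show ?thesis by (simp add: continuous_on_id)
next
  case (Suc m)
  show ?thesis unfolding Suc
    by (rule Ck_on_SucI[where D="\<lambda>i x. i"])
       (auto intro!: Ck_on_const has_derivative_eq_rhs[OF has_derivative_ident] simp: euclidean_representation)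
qed

lemma Ck_on_real_SucI:
  fixes f f' :: "real \<Rightarrow> real"
  assumes "\<forall>x\<in>S. (f has_real_derivative f' x) (at x within S)" "Ck_on k S f'"
  shows "Ck_on (Suc k) S f"
proof (rule Ck_on_SucI[where D="\<lambda>i x. f' x"])
  show "\<forall>x\<in>S. (f has_derivative (\<lambda>h. \<Sum>i\<in>Basis. (h \<bullet> i) *\<^sub>R f' x)) (at x within S)"
  proof
    fix x assume "x \<in> S"
    then have "(f has_derivative (\<lambda>h. f' x * h)) (at x within S)"
      using assms(1) by (simp add: has_field_derivative_def)
    then show "(f has_derivative (\<lambda>h. \<Sum>i\<in>Basis. (h \<bullet> i) *\<^sub>R f' x)) (at x within S)"
      by (rule has_derivative_eq_rhs) (auto simp: mult.commute)
  qed
  show "\<forall>i\<in>Basis. Ck_on k S (\<lambda>x. f' x)" using assms(2) by simp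
qed


lemma cmod_exp_i_minus_1: "cmod (exp (\<i> * complex_of_real u) - 1) = 2 * \<bar>sin (u/2)\<bar>"
proof -
  have "(cmod (exp (\<i> * complex_of_real u) - 1))^2 = (cos u - 1)^2 + (sin u)^2"
    by (simp add: cmod_power2 Re_exp Im_exp)
  also have "\<dots> = 2 - 2 * cos u" by (simp add: power2_eq_square algebra_simps sin_squared_eq)
  also have "\<dots> = (2 * \<bar>sin (u/2)\<bar>)^2"
    using cos_double_sin[of "u/2"] by (simp add: power_mult_distrib)
  finally show ?thesis
    by (metis abs_of_nonneg norm_ge_zero power2_eq_imp_eq zero_le_mult_iff abs_ge_zero zero_le_numeral)
qed

lemma cmod_exp_i_diff: "cmod (exp (\<i> * complex_of_real x) - exp (\<i> * complex_of_real y)) \<le> \<bar>x - y\<bar>"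
proof -
  have "exp (\<i> * complex_of_real x) - exp (\<i> * complex_of_real y) = exp (\<i> * complex_of_real y) * (exp (\<i> * complex_of_real (x - y)) - 1)"
    by (simp add: algebra_simps flip: exp_add)
  then have "cmod (exp (\<i> * complex_of_real x) - exp (\<i> * complex_of_real y)) = cmod (exp (\<i> * complex_of_real (x - y)) - 1)"
    by (simp add: norm_mult)
  also have "\<dots> = 2 * \<bar>sin ((x-y)/2)\<bar>" by (rule cmod_exp_i_minus_1)
  also have "\<dots> \<le> 2 * \<bar>(x-y)/2\<bar>" using abs_sin_x_le_abs_x[of "(x-y)/2"] by linarith
  finally show ?thesis by simp
qed

lemma cmod_exp_i_lower:
  assumes "\<bar>h\<bar> \<le> pi" "d \<le> \<bar>h\<bar>" "0 \<le> d"
  shows "2 * sin (d/2) \<le> cmod (exp (\<i> * complex_of_real h) - 1)"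
proof -
  have "sin (d/2) \<le> sin (\<bar>h\<bar>/2)" using assms by (intro sin_monotone_2pi_le) auto
  also have "\<dots> = \<bar>sin (h/2)\<bar>"
  proof (cases "h \<ge> 0")
    case True then show ?thesis using assms by (simp add: sin_ge_zero)
  next
    case False
    have "0 \<le> sin (-h/2)" using assms False by (intro sin_ge_zero) auto
    then have "sin (h/2) \<le> 0" by simp
    then show ?thesis using False by simp
  qed
  finally show ?thesis using cmod_exp_i_minus_1[of h] by simp
qed

lemma Basis_real_pair: "(Basis::(real\<times>real) set) = {(1,0),(0,1)}"
  by (auto simp: Basis_prod_def)

lemma sum_Basis_real_pair:
  fixes h :: "real \<times> real"
  shows "(\<Sum>i\<in>Basis. (h \<bullet> i) *\<^sub>R D i) = fst h *\<^sub>R D (1,0) + snd h *\<^sub>R D (0,1)"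
  by (simp add: Basis_real_pair inner_prod_def)

lemma mvt_box:
  fixes F Fs Ft :: "real \<times> real \<Rightarrow> real"
  assumes cvx: "convex B"
    and der: "\<forall>p\<in>B. (F has_derivative (\<lambda>h. fst h * Fs p + snd h * Ft p)) (at p within B)"
    and p: "p \<in> B" and q: "q \<in> B"
  shows "\<exists>w\<in>B. F q - F p = (fst q - fst p) * Fs w + (snd q - snd p) * Ft w \<and> dist w p \<le> dist q p"
proof -
  define ll where "ll x = p + x *\<^sub>R (q - p)" for x :: real
  have llB: "ll x \<in> B" if "0 \<le> x" "x \<le> 1" for x
  proof -
    have "ll x = (1 - x) *\<^sub>R p + x *\<^sub>R q" by (simp add: ll_def algebra_simps)
    then show ?thesis using cvx p q that by (simp add: convex_def)
  qed
  have dll: "(ll has_derivative (\<lambda>h. h *\<^sub>R (q - p))) (at x within {0..1})" for x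
    unfolding ll_def by (auto intro!: derivative_eq_intros)
  have "\<exists>x\<in>{0<..<1}. (F \<circ> ll) 1 - (F \<circ> ll) 0 =
     (\<lambda>h. fst (h *\<^sub>R (q - p)) * Fs (ll x) + snd (h *\<^sub>R (q - p)) * Ft (ll x)) (1 - 0)"
  proof (rule mvt_simple)
    fix x :: real assume x: "0 \<le> x" "x \<le> 1"
    have "(F has_derivative (\<lambda>h. fst h * Fs (ll x) + snd h * Ft (ll x))) (at (ll x) within B)"
      using der llB x by auto
    then have "(F has_derivative (\<lambda>h. fst h * Fs (ll x) + snd h * Ft (ll x))) (at (ll x) within ll ` {0..1})"
      by (rule has_derivative_subset) (use llB in auto)
    from diff_chain_within[OF dll this]
    show "((F \<circ> ll) has_derivative (\<lambda>h. fst (h *\<^sub>R (q - p)) * Fs (ll x) + snd (h *\<^sub>R (q - p)) * Ft (ll x))) (at x within {0..1})"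
      by (simp add: o_def)
  qed simp
  then obtain x where x: "0 < x" "x < 1" and eq: "F (ll 1) - F (ll 0) = (fst q - fst p) * Fs (ll x) + (snd q - snd p) * Ft (ll x)"
    by auto
  have "dist (ll x) p = x * dist q p" using x by (simp add: ll_def dist_norm)
  also have "\<dots> \<le> dist q p" using x by (simp add: mult_left_le_one_le)
  finally show ?thesis using eq llB[of x] x by (intro bexI[of _ "ll x"]) (auto simp: ll_def)
qed

theorem mainTheorem7:
  fixes zh :: "real \<times> real \<Rightarrow> complex"
    and T :: "real \<Rightarrow> real"
    and a \<epsilon> :: real
    and I :: "real set"
  assumes eps_pos: "\<epsilon> > 0"
    and I_open: "open I"
    and I_nbhd: "{0..2*pi} \<subseteq> I"
    and smooth: "Ck_on 7 ({0..\<epsilon>} \<times> I) zh"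
    and expansion: "\<exists>C. \<forall>s\<in>{0..\<epsilon>}. \<forall>t\<in>I.
        cmod (zh (s, t) - (exp (\<i> * t) - (4/3) * a * s^4 * exp (3 * \<i> * t))) \<le> C * s^5"
    and real_at_0: "\<forall>s\<in>{0..\<epsilon>}. Im (zh (s, 0)) = 0"
    and T0: "T 0 = 2 * pi"
    and T_pos: "\<forall>s\<in>{0<..\<epsilon>}. T s > 0"
    and T_dom: "\<forall>s\<in>{0<..\<epsilon>}. {0..T s} \<subseteq> I"
    and periodic: "\<forall>s\<in>{0<..\<epsilon>}. \<forall>t. t \<in> I \<and> t + T s \<in> I \<longrightarrow> zh (s, t + T s) = zh (s, t)"
    and simple_closed: "\<forall>s\<in>{0<..\<epsilon>}.
        simple_path (\<lambda>u. zh (s, u * T s)) \<and>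
        pathfinish (\<lambda>u. zh (s, u * T s)) = pathstart (\<lambda>u. zh (s, u * T s))"
  shows "\<exists>\<epsilon>'. 0 < \<epsilon>' \<and> \<epsilon>' \<le> \<epsilon> \<and> Ck_on 7 {0..\<epsilon>'} T \<and>
           (\<exists>C. \<forall>s\<in>{0..\<epsilon>'}. \<bar>T s - 2 * pi\<bar> \<le> C * s^5)"
proof -
  define S where "S = {0..\<epsilon>} \<times> I"
  obtain C where C: "\<forall>s\<in>{0..\<epsilon>}. \<forall>t\<in>I.
        cmod (zh (s, t) - (exp (\<i> * t) - (4/3) * a * s^4 * exp (3 * \<i> * t))) \<le> C * s^5"
    using expansion by blast
  have e3: "cmod (exp (3 * \<i> * complex_of_real t)) = 1" for t
  proof -
    have "3 * \<i> * complex_of_real t = \<i> * complex_of_real (3*t)" by simp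
    then show ?thesis by (simp only:) (rule norm_exp_i_times)
  qed
  define K where "K = \<bar>C\<bar> + 2 * \<bar>a\<bar>"
  have Kpos: "0 \<le> K" by (simp add: K_def)
  have close: "cmod (zh (s,t) - exp (\<i> * t)) \<le> K * s" if "s \<in> {0..\<epsilon>}" "t \<in> I" "s \<le> 1" for s t
  proof -
    have s: "0 \<le> s" "s \<le> 1" using that by auto
    have s4: "s^4 \<le> s" "s^5 \<le> s" using power_decreasing[of 1 4 s] power_decreasing[of 1 5 s] s by auto
    have "zh (s,t) - exp (\<i> * t) = (zh (s, t) - (exp (\<i> * t) - (4/3) * a * s^4 * exp (3 * \<i> * t)))
         - ((4/3) * a * s^4 * exp (3 * \<i> * t))" by simp
    then have "cmod (zh (s,t) - exp (\<i> * t)) \<le> cmod (zh (s, t) - (exp (\<i> * t) - (4/3) * a * s^4 * exp (3 * \<i> * t)))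
         + cmod ((4/3) * a * s^4 * exp (3 * \<i> * t))"
      by (metis norm_triangle_ineq4)
    also have "\<dots> \<le> C * s^5 + (4/3) * \<bar>a\<bar> * s^4"
      using C that by (intro add_mono) (auto simp: norm_mult e3 norm_power)
    also have "\<dots> \<le> \<bar>C\<bar> * s + 2 * \<bar>a\<bar> * s"
      using s s4 by (intro add_mono mult_mono) (auto simp: abs_le_iff intro: order_trans[OF abs_ge_self] mult_mono)
    finally show ?thesis by (simp add: K_def algebra_simps)
  qed
  have s7: "(7::nat) = Suc 6" by simp
  obtain D where Dd: "\<forall>x\<in>S. (zh has_derivative (\<lambda>h. \<Sum>i\<in>Basis. (h \<bullet> i) *\<^sub>R D i x)) (at x within S)"
    and Dk: "\<forall>i\<in>Basis. Ck_on 6 S (D i)"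
    using smooth[unfolded s7 S_def[symmetric]] by (rule Ck_on_SucE)
  define Fs where "Fs p = Im (D (1,0) p)" for p
  define Ft where "Ft p = Im (D (0,1) p)" for p
  define F where "F p = Im (zh p)" for p
  have derF: "\<forall>p\<in>S. (F has_derivative (\<lambda>h. fst h * Fs p + snd h * Ft p)) (at p within S)"
  proof
    fix p assume "p \<in> S"
    from bounded_linear.has_derivative[OF bounded_linear_Im Dd[rule_format, OF this]]
    show "(F has_derivative (\<lambda>h. fst h * Fs p + snd h * Ft p)) (at p within S)"
      unfolding F_def Fs_def Ft_def by (simp add: sum_Basis_real_pair)
  qed
  have Fs6: "Ck_on 6 S Fs" unfolding Fs_def
    using Dk by (intro Ck_on_linear[OF bounded_linear_Im]) (auto simp: Basis_real_pair)
  have Ft6: "Ck_on 6 S Ft" unfolding Ft_def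
    using Dk by (intro Ck_on_linear[OF bounded_linear_Im]) (auto simp: Basis_real_pair)
  have I2pi: "2*pi \<in> I" using I_nbhd by auto
  have I0: "0 \<in> I" using I_nbhd by auto
  have zh0: "zh (0,t) = exp (\<i> * t)" if "t \<in> I" for t
    using C[rule_format, of 0 t] that eps_pos by simp
  have Ft1: "Ft (0, 2*pi) = 1"
  proof -
    let ?x = "(0::real, 2*pi)"
    have xS: "?x \<in> S" using eps_pos I2pi by (simp add: S_def)
    have 1: "((\<lambda>t. (0::real, t)) has_derivative (\<lambda>h. (0, h))) (at (2*pi) within I)"
      by (rule has_derivative_Pair[OF has_derivative_const has_derivative_ident])
    have 2: "(zh has_derivative (\<lambda>h. \<Sum>i\<in>Basis. (h \<bullet> i) *\<^sub>R D i ?x)) (at ?x within (\<lambda>t. (0::real, t)) ` I)"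
      by (rule has_derivative_subset[OF Dd[rule_format, OF xS]]) (use eps_pos in \<open>auto simp: S_def\<close>)
    have "((zh \<circ> (\<lambda>t. (0::real, t))) has_derivative (\<lambda>h. h *\<^sub>R D (0,1) ?x)) (at (2*pi) within I)"
      using diff_chain_within[OF 1 2] by (simp add: sum_Basis_real_pair o_def)
    then have A: "((\<lambda>t. zh (0, t)) has_derivative (\<lambda>h. h *\<^sub>R D (0,1) ?x)) (at (2*pi))"
      using at_within_open[OF I2pi I_open] by (simp add: o_def)
    have "((\<lambda>z. exp (\<i> * z)) has_field_derivative (\<i> * exp (\<i> * complex_of_real (2*pi)))) (at (complex_of_real (2*pi)))"
      by (auto intro!: derivative_eq_intros)
    from has_vector_derivative_real_field[OF this]
    have "((\<lambda>t::real. exp (\<i> * complex_of_real t)) has_derivative (\<lambda>h. h *\<^sub>R (\<i> * exp (\<i> * complex_of_real (2*pi))))) (at (2*pi))"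
      by (simp add: has_vector_derivative_def)
    then have B: "((\<lambda>t. zh (0, t)) has_derivative (\<lambda>h. h *\<^sub>R (\<i> * exp (\<i> * complex_of_real (2*pi))))) (at (2*pi))"
      by (rule has_derivative_transform_within_open[OF _ I_open I2pi]) (simp add: zh0)
    have "(\<lambda>h::real. h *\<^sub>R D (0,1) ?x) = (\<lambda>h. h *\<^sub>R (\<i> * exp (\<i> * complex_of_real (2*pi))))"
      by (rule has_derivative_unique[OF A B])
    then have "D (0,1) ?x = \<i> * exp (\<i> * complex_of_real (2*pi))" by (metis scaleR_one)
    also have "\<dots> = \<i>"
      using exp_integer_2pi[of 1] by (simp add: mult.commute)
    finally show ?thesis by (simp add: Ft_def)
  qed
  have S0: "(0, 2*pi) \<in> S" using eps_pos I2pi by (simp add: S_def)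
  have contFt: "continuous_on S Ft" using Ft6 by (rule Ck_on_cont)
  obtain r where r: "r > 0" "\<forall>p\<in>S. dist p (0,2*pi) < r \<longrightarrow> dist (Ft p) (Ft (0,2*pi)) < 1/2"
    using continuous_on_iff[THEN iffD1, OF contFt, rule_format, OF S0, of "1/2"] by auto
  obtain \<delta>0 where \<delta>0: "\<delta>0 > 0" "ball (2*pi) \<delta>0 \<subseteq> I"
    using I_open I2pi open_contains_ball by blast
  define \<delta> where "\<delta> = min (min (\<delta>0/2) (r/3)) (1/2)"
  define \<epsilon>1 where "\<epsilon>1 = min \<epsilon> (r/3)"
  have \<delta>pos: "0 < \<delta>" "\<delta> \<le> 1/2" "\<delta> < \<delta>0" "\<delta> \<le> r/3" using \<delta>0 r by (auto simp: \<delta>_def)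
  have \<epsilon>1pos: "0 < \<epsilon>1" "\<epsilon>1 \<le> \<epsilon>" "\<epsilon>1 \<le> r/3" using eps_pos r by (auto simp: \<epsilon>1_def)
  define B where "B = {0..\<epsilon>1} \<times> {2*pi-\<delta>..2*pi+\<delta>}"
  have BS: "B \<subseteq> S"
  proof
    fix p assume "p \<in> B"
    then have "snd p \<in> ball (2*pi) \<delta>0" "fst p \<in> {0..\<epsilon>}" using \<delta>pos \<epsilon>1pos
      by (auto simp: B_def dist_real_def)
    then show "p \<in> S" using \<delta>0 by (auto simp: S_def mem_Times_iff)
  qed
  have cvxB: "convex B" by (simp add: B_def convex_Times)
  have cptB: "compact B" by (simp add: B_def compact_Times)
  have FtB: "Ft p \<ge> 1/2" if "p \<in> B" for p
  proof -
    have "dist p (0, 2*pi) = norm (fst p, snd p - 2*pi)" by (cases p) (simp add: dist_norm)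
    also have "\<dots> \<le> norm (fst p) + norm (snd p - 2*pi)" by (rule norm_Pair_le)
    also have "\<dots> < r" using that \<delta>pos \<epsilon>1pos r by (auto simp: B_def)
    finally have "dist (Ft p) (Ft (0,2*pi)) < 1/2" using r that BS by auto
    then have "\<bar>Ft p - 1\<bar> < 1/2" using Ft1 by (simp only: dist_real_def)
    then show ?thesis using abs_less_iff[of "Ft p - 1" "1/2"] by linarith
  qed
  have derFB: "\<forall>p\<in>B. (F has_derivative (\<lambda>h. fst h * Fs p + snd h * Ft p)) (at p within B)"
    using derF BS by (auto intro: has_derivative_subset)
  note mvt = mvt_box[OF cvxB derFB]
  define \<rho>0 where "\<rho>0 = min (1/4) (sin (\<delta>/2) / 2)"
  have sinpos: "sin (\<delta>/2) > 0" using \<delta>pos pi_gt3 by (intro sin_gt_zero) auto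
  have \<rho>0pos: "0 < \<rho>0" "\<rho>0 \<le> 1/4" "\<rho>0 \<le> sin (\<delta>/2) / 2" using sinpos by (auto simp: \<rho>0_def)
  define \<epsilon>' where "\<epsilon>' = min \<epsilon>1 (min 1 (\<rho>0 / (K+1)))"
  have \<epsilon>'pos: "0 < \<epsilon>'" "\<epsilon>' \<le> \<epsilon>1" "\<epsilon>' \<le> 1" "\<epsilon>' \<le> \<rho>0 / (K+1)"
  proof -
    have "0 < \<rho>0 / (K+1)" using \<rho>0pos Kpos by simp
    then show "0 < \<epsilon>'" "\<epsilon>' \<le> \<epsilon>1" "\<epsilon>' \<le> 1" "\<epsilon>' \<le> \<rho>0 / (K+1)"
      using \<epsilon>1pos unfolding \<epsilon>'_def by (simp_all add: min_le_iff_disj)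
  qed
  have close': "cmod (zh (s,t) - exp (\<i> * t)) \<le> \<rho>0" if "s \<in> {0..\<epsilon>'}" "t \<in> I" for s t
  proof -
    have s: "s \<in> {0..\<epsilon>}" "s \<le> 1" using that \<epsilon>'pos \<epsilon>1pos by auto
    have "K * s \<le> (K+1) * s" using that by (simp add: algebra_simps)
    also have "\<dots> \<le> (K+1) * (\<rho>0 / (K+1))" using that \<epsilon>'pos Kpos by (intro mult_left_mono) auto
    also have "\<dots> = \<rho>0" using Kpos by simp
    finally show ?thesis using close[OF s(1) that(2) s(2)] by linarith
  qed
  have tri3: "cmod (x + y + z) \<le> cmod x + cmod y + cmod z" for x y z :: complex
    using norm_triangle_ineq[of "x+y" z] norm_triangle_ineq[of x y] by linarith
  have half: "X * (1/2) \<le> Y \<Longrightarrow> X \<le> 2 * Y" for X Y :: real by linarith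
  have cis_exp: "exp (\<i> * complex_of_real x) = cis x" for x by (simp add: cis_conv_exp)
  have loc: "\<bar>T s - 2*pi\<bar> < \<delta>" if s: "s \<in> {0<..\<epsilon>'}" for s
  proof -
    have sE: "s \<in> {0<..\<epsilon>}" "s \<in> {0..\<epsilon>}" "s \<in> {0..\<epsilon>'}" using s \<epsilon>'pos \<epsilon>1pos by auto
    define Ts where "Ts = T s"
    have Tp: "Ts > 0" using T_pos sE by (auto simp: Ts_def)
    have TI: "{0..Ts} \<subseteq> I" using T_dom sE by (auto simp: Ts_def)
    have TsI: "Ts \<in> I" using TI Tp by auto
    have per0: "zh (s, Ts) = zh (s, 0)"
      using periodic[rule_format, OF sE(1), of 0] I0 TsI by (simp add: Ts_def)
    have cl: "cmod (zh (s,t) - exp (\<i> * t)) \<le> \<rho>0" if "t \<in> I" for t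
      using close' sE(3) that by blast
    define n where "n = round (Ts / (2*pi))"
    define h where "h = Ts - 2*pi*n"
    have hpi: "\<bar>h\<bar> \<le> pi"
    proof -
      have "\<bar>of_int n - Ts / (2*pi)\<bar> \<le> 1/2" unfolding n_def by (rule of_int_round_abs_le)
      then have "\<bar>2*pi*(of_int n - Ts / (2*pi))\<bar> \<le> 2*pi*(1/2)"
        by (simp add: abs_mult)
      then show ?thesis by (simp add: h_def algebra_simps abs_minus_commute)
    qed
    have eh: "exp (\<i> * complex_of_real Ts) = exp (\<i> * complex_of_real h)"
    proof -
      have "Ts = h + 2*pi* of_int n" by (simp add: h_def)
      have "cis Ts = cis h * cis (2*pi* of_int n)" unfolding cis_mult by (simp add: h_def)
      also have "cis (2*pi* of_int n) = 1" by (rule cis_multiple_2pi) simp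
      finally show ?thesis by (simp add: cis_exp)
    qed
    have "cmod (exp (\<i> * complex_of_real h) - 1) \<le> 2*\<rho>0"
    proof -
      have "exp (\<i> * complex_of_real h) - 1 = (exp (\<i> * complex_of_real Ts) - zh (s, Ts)) + (zh (s,0) - exp (\<i> * complex_of_real 0))"
        using eh per0 by simp
      also have "cmod \<dots> \<le> cmod (exp (\<i> * complex_of_real Ts) - zh (s, Ts)) + cmod (zh (s,0) - exp (\<i> * complex_of_real 0))"
        by (rule norm_triangle_ineq)
      also have "\<dots> \<le> \<rho>0 + \<rho>0" using cl[OF TsI] cl[OF I0] by (intro add_mono) (simp_all add: norm_minus_commute)
      finally show ?thesis by simp
    qed
    then have h\<delta>: "\<bar>h\<bar> < \<delta>"
      using cmod_exp_i_lower[OF hpi, of \<delta>] \<delta>pos \<rho>0pos sinpos by (cases "\<delta> \<le> \<bar>h\<bar>") auto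
    have n_ge: "n \<ge> 1"
    proof (rule ccontr)
      assume "\<not> n \<ge> 1"
      then have "n \<le> 0" by simp
      show False
      proof (cases "n = 0")
        case False
        then have "n \<le> -1" using \<open>n \<le> 0\<close> by simp
        then have "2*pi* of_int n \<le> 2*pi*(-1)" by (intro mult_left_mono) auto
        then show False using Tp h\<delta> \<delta>pos pi_gt3 by (simp add: h_def)
      next
        case True
        then have Tsd: "Ts < \<delta>" using h\<delta> Tp by (simp add: h_def)
        have it: "zh (s, pi - real k * Ts) = zh (s, pi)" if "real k * Ts \<le> pi" for k :: nat
          using that
        proof (induction k)
          case 0 show ?case by simp
        next
          case (Suc k)
          define t where "t = pi - real (Suc k) * Ts"
          have t0: "0 \<le> t" "t \<le> pi" using Suc.prems Tp by (auto simp: t_def)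
          have tI: "t \<in> I" "t + Ts \<in> I" using t0 I_nbhd Tp Suc.prems
            by (auto simp: t_def algebra_simps intro!: subsetD[OF I_nbhd])
          have "zh (s, t + Ts) = zh (s, t)"
            using periodic[rule_format, OF sE(1), of t] tI by (simp add: Ts_def)
          moreover have "t + Ts = pi - real k * Ts" by (simp add: t_def algebra_simps)
          moreover have "real k * Ts \<le> pi" using Suc.prems Tp by (simp add: algebra_simps)
          ultimately have "zh (s, t) = zh (s, pi)" using Suc.IH by metis
          then show ?case unfolding t_def .
        qed
        define j where "j = nat \<lfloor>pi / Ts\<rfloor>"
        have fl: "0 \<le> \<lfloor>pi / Ts\<rfloor>" using Tp by simp
        have rj: "real j = of_int \<lfloor>pi / Ts\<rfloor>" using fl by (simp add: j_def)
        have j1: "real j * Ts \<le> pi"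
          using floor_divide_lower[OF Tp, of pi] rj by simp
        have j2: "pi - real j * Ts < Ts"
        proof -
          have "pi / Ts < real j + 1" using rj by linarith
          then have "pi < (real j + 1) * Ts" using Tp by (simp add: divide_less_eq)
          then show ?thesis by (simp add: algebra_simps)
        qed
        define \<tau> where "\<tau> = pi - real j * Ts"
        have jT: "0 \<le> real j * Ts" using Tp by simp
        have \<tau>0: "0 \<le> \<tau>" using j1 by (simp add: \<tau>_def)
        have \<tau>1: "\<tau> < \<delta>" using j2 Tsd by (simp add: \<tau>_def)
        have \<tau>2: "\<tau> \<le> 2*pi" using jT pi_gt3 by (simp add: \<tau>_def)
        have \<tau>3: "\<tau> \<in> I" using \<tau>0 \<tau>2 by (intro subsetD[OF I_nbhd]) auto
        note \<tau> = \<tau>0 \<tau>1 \<tau>3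
        have piI: "pi \<in> I" using I_nbhd pi_gt3 by (auto intro!: subsetD[OF I_nbhd])
        have eq: "zh (s, \<tau>) = zh (s, pi)" using it[OF j1] by (simp add: \<tau>_def)
        have "(-1::complex) - 1 = (exp (\<i> * complex_of_real pi) - zh (s, pi)) + (zh (s, \<tau>) - exp (\<i> * complex_of_real \<tau>))
              + (exp (\<i> * complex_of_real \<tau>) - exp (\<i> * complex_of_real 0))"
          using eq by simp
        then have "cmod ((-1::complex) - 1) \<le> cmod (exp (\<i> * complex_of_real pi) - zh (s, pi)) + cmod (zh (s, \<tau>) - exp (\<i> * complex_of_real \<tau>))
              + cmod (exp (\<i> * complex_of_real \<tau>) - exp (\<i> * complex_of_real 0))"
          by (simp only:) (rule tri3)
        also have "\<dots> \<le> \<rho>0 + \<rho>0 + \<bar>\<tau> - 0\<bar>"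
        proof -
          have b1: "cmod (exp (\<i> * complex_of_real pi) - zh (s, pi)) \<le> \<rho>0"
            using cl[OF piI] by (simp only: norm_minus_commute)
          have b2: "cmod (zh (s, \<tau>) - exp (\<i> * complex_of_real \<tau>)) \<le> \<rho>0" using cl[OF \<tau>(3)] .
          have b3: "cmod (exp (\<i> * complex_of_real \<tau>) - exp (\<i> * complex_of_real 0)) \<le> \<bar>\<tau> - 0\<bar>"
            by (rule cmod_exp_i_diff)
          show ?thesis using b1 b2 b3 by linarith
        qed
        finally show False using \<rho>0pos \<tau> \<delta>pos by simp
      qed
    qed
    have n_le: "n \<le> 1"
    proof -
      define \<gamma> where "\<gamma> = (\<lambda>u. zh (s, u * T s))"
      have sp: "simple_path \<gamma>" "pathfinish \<gamma> = pathstart \<gamma>" using simple_closed sE by (auto simp: \<gamma>_def)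
      define p where "p = (\<lambda>u::real. \<i> * complex_of_real (2*pi* of_int n*u))"
      define q where "q = exp \<circ> p"
      have pp: "path p" unfolding p_def path_def by (intro continuous_intros)
      have wq: "winding_number q 0 = of_int n"
        using winding_number_compose_exp[OF pp] unfolding q_def
        by (simp add: p_def pathfinish_def pathstart_def)
      have qc: "q u = cis (2*pi* of_int n*u)" for u unfolding q_def p_def o_def by (rule cis_exp)
      have nq: "cmod (q u) = 1" for u by (simp add: qc)
      have q1: "pathfinish q = pathstart q" using qc[of 1] qc[of 0] by (simp add: pathfinish_def pathstart_def)
      have pq: "path q" unfolding q_def p_def path_def o_def by (intro continuous_intros)
      have clq: "cmod (\<gamma> u - q u) < 1" if u: "u \<in> {0..1}" for u
      proof -
        have uI: "u * Ts \<in> I" using u TI Tp by (auto intro!: subsetD[OF TI] mult_le_one simp: mult_left_le_one_le)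
        have "\<gamma> u - q u = (zh (s, u*Ts) - exp (\<i> * complex_of_real (u*Ts))) + (exp (\<i> * complex_of_real (u*Ts)) - exp (\<i> * complex_of_real (2*pi* of_int n*u)))"
          by (simp add: \<gamma>_def q_def p_def Ts_def)
        then have "cmod (\<gamma> u - q u) \<le> cmod (zh (s, u*Ts) - exp (\<i> * complex_of_real (u*Ts))) + cmod (exp (\<i> * complex_of_real (u*Ts)) - exp (\<i> * complex_of_real (2*pi* of_int n*u)))"
          by (simp only:) (rule norm_triangle_ineq)
        also have "\<dots> \<le> \<rho>0 + \<bar>u*Ts - 2*pi* of_int n*u\<bar>"
          by (rule add_mono[OF cl[OF uI] cmod_exp_i_diff])
        also have "\<bar>u*Ts - 2*pi* of_int n*u\<bar> = u * \<bar>h\<bar>"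
        proof -
          have "u*Ts - 2*pi* of_int n*u = u * h" by (simp add: h_def algebra_simps)
          then show ?thesis using u by (simp add: abs_mult)
        qed
        also have "u * \<bar>h\<bar> \<le> \<bar>h\<bar>" using u by (simp add: mult_left_le_one_le)
        finally show ?thesis using h\<delta> \<delta>pos \<rho>0pos by simp
      qed
      have hom: "homotopic_loops (-{0}) \<gamma> q"
      proof (rule homotopic_loops_linear)
        show "path \<gamma>" using sp(1) by (rule simple_path_imp_path)
        show "closed_segment (\<gamma> t) (q t) \<subseteq> - {0}" if "t \<in> {0..1}" for t
        proof
          fix x assume x: "x \<in> closed_segment (\<gamma> t) (q t)"
          have "dist x (q t) \<le> dist (\<gamma> t) (q t)" using dist_in_closed_segment[OF x] by blast
          then have "cmod (x - q t) < 1" using clq[OF that] by (simp add: dist_norm)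
          then show "x \<in> - {0}" using nq[of t] by (auto simp: norm_minus_commute)
        qed
      qed (use sp pq q1 in auto)
      have w: "winding_number \<gamma> 0 = of_int n" using winding_number_homotopic_loops[OF hom] wq by simp
      have "0 \<notin> path_image \<gamma>" using homotopic_loops_imp_subset[OF hom] by auto
      from simple_closed_path_winding_number_cases[OF sp this] w
      have "(of_int n :: complex) \<in> {-1, 0, 1}" by simp
      then have "of_int n = (of_int (-1) :: complex) \<or> of_int n = (of_int 0::complex) \<or> of_int n = (of_int 1 :: complex)" by simp
      then show "n \<le> 1" unfolding of_int_eq_iff by auto
    qed
    have "n = 1" using n_ge n_le by simp
    then show ?thesis using h\<delta> by (simp add: h_def Ts_def)
  qed
  have e1: "exp (\<i> * complex_of_real (2*pi)) = 1" unfolding cis_exp by simp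
  have e3': "exp (3 * \<i> * complex_of_real (2*pi)) = 1"
  proof -
    have "3 * \<i> * complex_of_real (2*pi) = \<i> * complex_of_real (2*pi*3)" by simp
    then show ?thesis using cis_multiple_2pi[of 3] by (simp only: cis_exp) simp
  qed
  have Fzero: "(s, T s) \<in> B \<and> F (s, T s) = 0" if s: "s \<in> {0..\<epsilon>'}" for s
  proof (cases "s = 0")
    case True
    have "zh (0, 2*pi) = 1" using zh0[OF I2pi, unfolded e1] .
    then show ?thesis using True T0 \<delta>pos \<epsilon>1pos by (simp add: B_def F_def)
  next
    case False
    then have s': "s \<in> {0<..\<epsilon>'}" using s by auto
    have sE: "s \<in> {0<..\<epsilon>}" "s \<in> {0..\<epsilon>}" using s' \<epsilon>'pos \<epsilon>1pos by auto
    have TI0: "{0..T s} \<subseteq> I" "T s > 0" using T_dom T_pos sE(1) by auto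
    have TI: "T s \<in> I" using TI0 by auto
    have "zh (s, 0 + T s) = zh (s, 0)" using periodic[rule_format, OF sE(1), of 0] I0 TI by simp
    then have "F (s, T s) = Im (zh (s,0))" by (simp add: F_def)
    also have "\<dots> = 0" using real_at_0 sE by auto
    finally show ?thesis using loc[OF s'] s \<epsilon>'pos by (auto simp: B_def abs_less_iff)
  qed
  have bound: "\<bar>T s - 2*pi\<bar> \<le> (2*\<bar>C\<bar>) * s^5" if s: "s \<in> {0..\<epsilon>'}" for s
  proof -
    have sE: "s \<in> {0..\<epsilon>}" using s \<epsilon>'pos \<epsilon>1pos by auto
    have pB: "(s, 2*pi) \<in> B" using s \<epsilon>'pos \<delta>pos by (auto simp: B_def)
    have qB: "(s, T s) \<in> B" and Fq: "F (s, T s) = 0" using Fzero[OF s] by auto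
    obtain w where w: "w \<in> B" "F (s, T s) - F (s, 2*pi) = (fst (s, T s) - fst (s, 2*pi)) * Fs w + (snd (s, T s) - snd (s, 2*pi)) * Ft w"
      using mvt[OF pB qB] by blast
    have "\<bar>F (s, 2*pi)\<bar> \<le> C * s^5"
    proof -
      have "Im ((4/3) * a * s^4 * exp (3 * \<i> * complex_of_real (2*pi))) = 0" unfolding e3' by simp
      then have "F (s, 2*pi) = Im (zh (s, 2*pi) - (exp (\<i> * complex_of_real (2*pi)) - (4/3) * a * s^4 * exp (3 * \<i> * complex_of_real (2*pi))))"
        unfolding e1 by (simp add: F_def)
      also have "\<bar>\<dots>\<bar> \<le> cmod (zh (s, 2*pi) - (exp (\<i> * complex_of_real (2*pi)) - (4/3) * a * s^4 * exp (3 * \<i> * complex_of_real (2*pi))))"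
        by (rule abs_Im_le_cmod)
      also have "\<dots> \<le> C * s^5" using C sE I2pi by blast
      finally show ?thesis .
    qed
    moreover have fe: "F (s, 2*pi) = - ((T s - 2*pi) * Ft w)" using w(2) Fq by simp
    moreover have Ftw0: "0 \<le> Ft w" "1/2 \<le> Ft w" using FtB[OF w(1)] by auto
    ultimately have h1: "\<bar>T s - 2*pi\<bar> * Ft w \<le> C * s^5" by (simp add: abs_mult)
    have "\<bar>T s - 2*pi\<bar> * (1/2) \<le> \<bar>T s - 2*pi\<bar> * Ft w" using Ftw0 by (intro mult_left_mono) auto
    from order_trans[OF this h1] have X: "\<bar>T s - 2*pi\<bar> \<le> 2 * (C * s^5)" by (rule half)
    have "C * s^5 \<le> \<bar>C\<bar> * s^5" using s by (intro mult_right_mono) auto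
    then have "2 * (C * s^5) \<le> 2 * (\<bar>C\<bar> * s^5)" by simp
    with X have "\<bar>T s - 2*pi\<bar> \<le> 2 * (\<bar>C\<bar> * s^5)" by (rule order_trans)
    then show ?thesis by simp
  qed
  define g where "g p = (-1) * (Fs p * inverse (Ft p))" for p
  have FtnzB: "\<forall>p\<in>B. Ft p \<noteq> 0" using FtB by force
  have g6: "Ck_on 6 B g" unfolding g_def
    by (intro Ck_on_mult Ck_on_const Ck_on_inverse Ck_on_subset[OF Fs6 BS] Ck_on_subset[OF Ft6 BS] FtnzB)
  have gcont: "continuous_on B g" using g6 by (rule Ck_on_cont)
  obtain M where M: "M \<ge> 0" "\<forall>w\<in>B. \<bar>Fs w\<bar> \<le> M"
  proof -
    have "compact (Fs ` B)" by (rule compact_continuous_image[OF Ck_on_cont[OF Ck_on_subset[OF Fs6 BS]] cptB])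
    from compact_imp_bounded[OF this] obtain M0 where "\<forall>x\<in>Fs ` B. norm x \<le> M0" unfolding bounded_iff by blast
    then have "\<forall>w\<in>B. \<bar>Fs w\<bar> \<le> max M0 0" by auto
    then show ?thesis using that[of "max M0 0"] by auto
  qed
  define A where "A = {0..\<epsilon>'}"
  have dT: "(T has_real_derivative g (s0, T s0)) (at s0 within A)" if s0: "s0 \<in> A" for s0
  proof -
    define p0 where "p0 = (s0, T s0)"
    have p0B: "p0 \<in> B" and F0: "F p0 = 0" using Fzero s0 by (auto simp: A_def p0_def)
    show ?thesis
      unfolding has_field_derivative_iff Lim_within
    proof (intro allI impI)
      fix e :: real assume e: "e > 0"
      obtain d1 where d1: "d1 > 0" "\<forall>w\<in>B. dist w p0 < d1 \<longrightarrow> dist (g w) (g p0) < e"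
        using continuous_on_iff[THEN iffD1, OF gcont, rule_format, OF p0B e] by auto
      define d where "d = d1 / (1 + 2*M)"
      have dpos: "d > 0" using d1 M by (simp add: d_def)
      show "\<exists>d>0. \<forall>s\<in>A. 0 < dist s s0 \<and> dist s s0 < d \<longrightarrow> dist ((T s - T s0) / (s - s0)) (g (s0, T s0)) < e"
      proof (intro exI[of _ d] conjI ballI impI dpos)
        fix s assume sA: "s \<in> A" and ds: "0 < dist s s0 \<and> dist s s0 < d"
        define q where "q = (s, T s)"
        have qB: "q \<in> B" and Fq: "F q = 0" using Fzero sA by (auto simp: A_def q_def)
        obtain w where wB: "w \<in> B" and weq: "F q - F p0 = (fst q - fst p0) * Fs w + (snd q - snd p0) * Ft w"
          and wd: "dist w p0 \<le> dist q p0"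
          using mvt[OF p0B qB] by blast
        have Ftw: "Ft w \<ge> 1/2" using FtB[OF wB] .
        have eq00: "0 = (s - s0) * Fs w + (T s - T s0) * Ft w" using weq Fq F0 unfolding q_def p0_def by simp
        then have eq0: "(T s - T s0) * Ft w = - ((s - s0) * Fs w)" by linarith
        have sne: "s - s0 \<noteq> 0" using ds by auto
        have Ftnz: "Ft w \<noteq> 0" using Ftw by auto
        have TT': "T s - T s0 = (s - s0) * g w" using eq0 Ftnz by (simp add: g_def field_simps)
        have quot: "(T s - T s0) / (s - s0) = g w" unfolding TT' using sne by simp
        have Ftw0: "0 \<le> Ft w" using Ftw by linarith
        have "\<bar>T s - T s0\<bar> * (1/2) \<le> \<bar>T s - T s0\<bar> * Ft w" using Ftw by (intro mult_left_mono) auto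
        also have "\<dots> = \<bar>(T s - T s0) * Ft w\<bar>" using Ftw0 by (simp add: abs_mult)
        also have "\<dots> = \<bar>s - s0\<bar> * \<bar>Fs w\<bar>" unfolding eq0 by (simp add: abs_mult)
        also have "\<dots> \<le> \<bar>s - s0\<bar> * M" using M wB by (intro mult_left_mono) auto
        finally have TT: "\<bar>T s - T s0\<bar> \<le> 2 * (\<bar>s - s0\<bar> * M)" by (rule half)
        have M1: "0 < 1 + 2*M" using M by simp
        have "dist q p0 = norm (s - s0, T s - T s0)" by (simp add: q_def p0_def dist_norm)
        also have "\<dots> \<le> norm (s - s0) + norm (T s - T s0)" by (rule norm_Pair_le)
        also have "\<dots> \<le> \<bar>s - s0\<bar> + 2 * (\<bar>s - s0\<bar> * M)" using TT by simp
        also have "\<dots> = (1 + 2*M) * \<bar>s - s0\<bar>" by (simp add: algebra_simps)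
        also have "\<dots> < (1 + 2*M) * d" using ds M1 by (intro mult_strict_left_mono) (auto simp: dist_real_def)
        also have "\<dots> = d1" using M1 by (simp add: d_def)
        finally have "dist w p0 < d1" using wd by linarith
        then have "dist (g w) (g p0) < e" using d1 wB by auto
        then show "dist ((T s - T s0) / (s - s0)) (g (s0, T s0)) < e" using quot by (simp add: p0_def)
      qed
    qed
  qed
  have TC: "Ck_on m A T" if "m \<le> 7" for m
    using that
  proof (induction m)
    case 0
    have "continuous_on A T"
      unfolding continuous_on_eq_continuous_within
    proof
      fix x assume "x \<in> A"
      from dT[OF this] have "(T has_derivative (*) (g (x, T x))) (at x within A)"
        unfolding has_field_derivative_def .
      then show "continuous (at x within A) T" by (rule has_derivative_continuous)
    qed
    then show ?case by simp
  next
    case (Suc m)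
    then have m6: "m \<le> 6" and IH: "Ck_on m A T" by auto
    have gam: "Ck_on m A (\<lambda>s. (s, T s))" by (rule Ck_on_pair[OF Ck_on_id IH])
    have img: "(\<lambda>s. (s, T s)) ` A \<subseteq> B" using Fzero by (auto simp: A_def)
    have gc: "Ck_on m A (\<lambda>s. g (s, T s))" by (rule Ck_on_compose[OF Ck_on_le[OF m6 g6] gam img])
    show ?case by (rule Ck_on_real_SucI[OF _ gc]) (use dT in auto)
  qed
  have "Ck_on 7 {0..\<epsilon>'} T" using TC[of 7] by (simp add: A_def)
  moreover have "\<forall>s\<in>{0..\<epsilon>'}. \<bar>T s - 2 * pi\<bar> \<le> (2*\<bar>C\<bar>) * s^5" using bound by blast
  moreover have "\<epsilon>' \<le> \<epsilon>" using \<epsilon>'pos \<epsilon>1pos by linarith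
  ultimately show ?thesis using \<epsilon>'pos by blast
qed

end
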